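(* There exists a probability density $f$ supported on $[0,\infty)$ such that $f\in\mathcal{S}_0$ and $f$ is not almost decreasing.
   Context: For a probability density $f$ on $[0,\infty)$: $f\in\mathcal{L}_0$ (long-tailed density) if $f(x)>0$ for all sufficiently large $x$ and for every constant $t\in\mathbb{R}$, $f(x+t)\sim f(x)$ as $x\to\infty$ (where $a(x)\sim b(x)$ means $a(x)/b(x)\to1$). $f\in\mathcal{S}_0$ (subexponential density) if $f\in\mathcal{L}_0$ and $\int_0^x f(x-y)f(y)\,dy\sim 2f(x)$ as $x\to\infty$. The density $f$ is called almost decreasing if there exists a constant $x_0\ge 0$ such that $f(x)>0$ for all $x\ge x_0$ and $\sup_{x_0\le x\le y<\infty} f(y)/f(x)<\infty$. *)

theory Defs
  imports "HOL-Analysis.Analysis"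
begin

definition prob_density_nonneg :: "(real \<Rightarrow> real) \<Rightarrow> bool" where
  "prob_density_nonneg f \<longleftrightarrow>
     f \<in> borel_measurable lborel \<and> (\<forall>x. 0 \<le> f x) \<and> (\<forall>x<0. f x = 0) \<and>
     integrable lborel f \<and> (\<integral>x. f x \<partial>lborel) = 1"

definition long_tailed_density :: "(real \<Rightarrow> real) \<Rightarrow> bool" where
  "long_tailed_density f \<longleftrightarrow>
     (\<forall>\<^sub>F x in at_top. f x > 0) \<and>
     (\<forall>t::real. ((\<lambda>x. f (x + t) / f x) \<longlongrightarrow> 1) at_top)"

definition conv0 :: "(real \<Rightarrow> real) \<Rightarrow> real \<Rightarrow> real" where
  "conv0 f x = (LBINT y:{0..x}. f (x - y) * f y)"

text \<open>Subexponential density. We additionally require the convolution integrand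
  to be integrable on [0,x] for large x, so that the Bochner integral is the genuine one.\<close>
definition subexp_density :: "(real \<Rightarrow> real) \<Rightarrow> bool" where
  "subexp_density f \<longleftrightarrow> long_tailed_density f \<and>
     (\<forall>\<^sub>F x in at_top. set_integrable lborel {0..x} (\<lambda>y. f (x - y) * f y)) \<and>
     ((\<lambda>x. conv0 f x / (2 * f x)) \<longlongrightarrow> 1) at_top"

definition almost_decreasing :: "(real \<Rightarrow> real) \<Rightarrow> bool" where
  "almost_decreasing f \<longleftrightarrow>
     (\<exists>x0\<ge>0. (\<forall>x\<ge>x0. f x > 0) \<and>
        (\<exists>C. \<forall>x y. x0 \<le> x \<longrightarrow> x \<le> y \<longrightarrow> f y / f x \<le> C))"

end

theory Submission imports Defs begin

definition wq :: real where "wq = 10 * pi"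
definition Hq :: "real \<Rightarrow> real" where
  "Hq x = (-(1 + sin (wq * ln (1 + ln (1 + x)))) / 4 - 2) * ln (1 + x)"
definition Hd :: "real \<Rightarrow> real" where
  "Hd x = ((-(cos (wq * ln (1 + ln (1 + x)))) * wq / 4) * (ln (1 + x) / (1 + ln (1 + x)))
          + (-(1 + sin (wq * ln (1 + ln (1 + x)))) / 4 - 2)) / (1 + x)"
definition Kq :: real where "Kq = wq / 4 + 5 / 2"

lemma wq_pos: "wq > 0" by (simp add: wq_def)
lemma Kq_pos: "Kq > 0" using wq_pos by (simp add: Kq_def)

lemma alg: "1 + x > 0 \<Longrightarrow> 1 + L > 0 \<Longrightarrow> ((- 1 - s) / 4 - 2) / (1 + x) -
        w * c * L / (4 * ((1 + x) * (1 + L))) =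
        ((- 1 - s) / 4 - 2 - c * w * L / (4 + 4 * L)) / (1 + x)" for x L s w c :: real
proof -
  assume a: "1 + x > 0" "1 + L > 0"
  have e: "4 + 4 * L = 4 * (1 + L)" by simp
  show ?thesis unfolding e using a
    by (simp add: diff_divide_distrib mult_ac, simp add: algebra_simps)
qed

lemma tri: "0 \<le> q \<Longrightarrow> \<bar>a * q + b\<bar> \<le> \<bar>a\<bar> * q + \<bar>b::real\<bar>"
  using abs_triangle_ineq[of "a*q" b] by (simp add: abs_mult)

lemma sinb: "-1 \<le> s \<Longrightarrow> s \<le> 1 \<Longrightarrow> \<bar>-(1 + s) / 4 - 2\<bar> \<le> (5/2::real)"
  by (simp add: abs_le_iff field_simps)

lemma H_deriv: assumes "x \<ge> 0" shows "(Hq has_real_derivative Hd x) (at x)"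
proof -
  have l: "ln (1 + x) \<ge> 0" using assms by simp
  have l2: "1 + ln (1 + x) > 0" using l by simp
  show ?thesis
    unfolding Hq_def Hd_def
    apply (auto intro!: derivative_eq_intros)
    using assms l l2 apply simp_all
    apply (rule alg) using assms l2 by auto
qed

lemma Hd_bound: assumes "x \<ge> 0" shows "\<bar>Hd x\<bar> \<le> Kq / (1 + x)"
proof -
  define L where "L = ln (1 + x)"
  define A where "A = -(cos (wq * ln (1 + L))) * wq / 4"
  define B where "B = -(1 + sin (wq * ln (1 + L))) / 4 - 2"
  have L0: "L \<ge> 0" using assms by (simp add: L_def)
  have q0: "0 \<le> L / (1 + L)" "L / (1 + L) \<le> 1" using L0 by auto
  have A: "\<bar>A\<bar> \<le> wq / 4" using wq_pos abs_cos_le_one[of "wq * ln (1 + L)"]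
    by (simp add: A_def abs_mult)
  have B: "\<bar>B\<bar> \<le> 5/2" unfolding B_def using sin_le_one[of "wq * ln (1 + L)"] sin_ge_minus_one[of "wq * ln (1 + L)"]
    by (intro sinb)
  have "\<bar>A * (L / (1 + L)) + B\<bar> \<le> \<bar>A\<bar> * (L / (1 + L)) + \<bar>B\<bar>"
    using q0(1) by (rule tri)
  also have "\<dots> \<le> wq / 4 + 5/2"
  proof -
    have "\<bar>A\<bar> * (L / (1 + L)) \<le> wq / 4 * 1" using A q0 wq_pos by (intro mult_mono) auto
    then show ?thesis using B by linarith
  qed
  finally have "\<bar>A * (L / (1 + L)) + B\<bar> \<le> Kq" by (simp add: Kq_def)
  moreover have "Hd x = (A * (L / (1 + L)) + B) / (1 + x)"
    by (simp add: Hd_def A_def B_def L_def)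
  ultimately show ?thesis using assms by (simp add: divide_right_mono)
qed

lemma H_lip: assumes "0 \<le> a" "a \<le> b" shows "\<bar>Hq b - Hq a\<bar> \<le> Kq * (b - a) / (1 + a)"
proof (cases "a = b")
  case True then show ?thesis by simp
next
  case False
  then have ab: "a < b" using assms by simp
  obtain z where z: "a < z" "z < b" "Hq b - Hq a = (b - a) * Hd z"
    using MVT2[OF ab, of Hq Hd] H_deriv assms by force
  have "\<bar>Hd z\<bar> \<le> Kq / (1 + z)" using Hd_bound z assms by simp
  also have "\<dots> \<le> Kq / (1 + a)" using z assms Kq_pos by (intro divide_left_mono) auto
  finally have "(b - a) * \<bar>Hd z\<bar> \<le> (b - a) * (Kq / (1 + a))"
    using ab by (intro mult_left_mono) auto
  then have "\<bar>Hq b - Hq a\<bar> \<le> (b - a) * (Kq / (1 + a))"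
    using z ab by (simp add: abs_mult)
  then show ?thesis by (simp add: algebra_simps)
qed

lemma H_cont: "continuous_on {0..} Hq"
proof (rule continuous_at_imp_continuous_on, rule ballI)
  fix x :: real assume "x \<in> {0..}"
  then show "isCont Hq x" using H_deriv DERIV_isCont by auto
qed

lemma expH_le: assumes "x \<ge> 0" shows "exp (Hq x) \<le> 1 / (1 + x)^2"
proof -
  have "Hq x \<le> -2 * ln (1 + x)"
    unfolding Hq_def using assms sin_ge_minus_one[of "wq * ln (1 + ln (1 + x))"]
    by (intro mult_right_mono) auto
  then have "exp (Hq x) \<le> exp (-(2 * ln (1 + x)))" by simp
  also have "\<dots> = 1 / (1 + x)^2"
  proof -
    have "exp (2 * ln (1 + x)) = (1 + x)^2" using assms by (subst exp_double) simp
    then show ?thesis by (simp add: exp_minus inverse_eq_divide)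
  qed
  finally show ?thesis .
qed

lemma H_rise: "\<exists>x y. x0 \<le> x \<and> x \<le> y \<and> Hq y - Hq x > M"
proof -
  define B where "B = max x0 (4 * M + 1)"
  obtain n :: nat where n: "5 * B < real n" using reals_Archimedean2 by blast
  define v1 where "v1 = (2 * real n + 1/2) / 10"
  define v2 where "v2 = v1 + 1/10"
  define L1 where "L1 = exp v1 - 1"
  define L2 where "L2 = exp v2 - 1"
  define x where "x = exp L1 - 1"
  define y where "y = exp L2 - 1"
  have v1B: "v1 > B" using n by (simp add: v1_def)
  have v1pos: "v1 \<ge> 0" by (simp add: v1_def)
  have L1: "L1 \<ge> v1" using exp_ge_add_one_self[of v1] unfolding L1_def by linarith
  have x1: "x \<ge> L1" using exp_ge_add_one_self[of L1] unfolding x_def by linarith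
  have Lx: "ln (1 + x) = L1" by (simp add: x_def)
  have Ly: "ln (1 + y) = L2" by (simp add: y_def)
  have vx: "ln (1 + L1) = v1" by (simp add: L1_def)
  have vy: "ln (1 + L2) = v2" by (simp add: L2_def)
  have s1: "sin (wq * v1) = 1"
  proof -
    have "wq * v1 = 2 * real n * pi + pi / 2" by (simp add: wq_def v1_def field_simps)
    then show ?thesis by (simp add: sin_add sin_2npi cos_2npi)
  qed
  have s2: "sin (wq * v2) = -1"
  proof -
    have e: "wq * v2 = (2 * real n * pi + pi / 2) + pi" by (simp add: wq_def v2_def v1_def field_simps)
    show ?thesis unfolding e sin_periodic_pi by (simp add: sin_add)
  qed
  have Hx: "Hq x = -5/2 * L1" by (simp add: Hq_def Lx vx s1)
  have Hy: "Hq y = -2 * L2" by (simp add: Hq_def Ly vy s2)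
  have e: "exp (1/10::real) \<le> 10/9"
  proof -
    have "9/10 \<le> exp (-(1/10::real))" using exp_minus_ge[of "1/10"] by simp
    then show ?thesis by (simp add: exp_minus field_simps)
  qed
  have ev2: "exp v2 = exp v1 * exp (1/10)" by (simp add: v2_def exp_add)
  have "Hq y - Hq x = exp v1 * (5/2 - 2 * exp (1/10)) - 1/2"
    by (simp add: Hx Hy L1_def L2_def ev2 field_simps)
  also have "\<dots> \<ge> exp v1 * (1/4) - 1/2"
    using e by (intro diff_right_mono mult_left_mono) auto
  finally have "Hq y - Hq x \<ge> exp v1 / 4 - 1/2" by simp
  moreover have "exp v1 \<ge> 1 + v1" by (rule exp_ge_add_one_self)
  moreover have "v1 > 4 * M + 1" using v1B by (simp add: B_def)
  ultimately have "Hq y - Hq x > M" by linarith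
  moreover have "x0 \<le> x" using v1B L1 x1 by (simp add: B_def)
  moreover have "x \<le> y" by (simp add: x_def y_def L1_def L2_def v2_def)
  ultimately show ?thesis by blast
qed

lemma int_sq: "integrable lborel (\<lambda>x::real. indicator {1..} x * (1 / x^2))"
proof -
  have "(\<lambda>x::real. 1 / x ^ 2) integrable_on {1..}"
    using has_integral_inverse_power_to_inf[of 2 1] by (auto simp: integrable_on_def)
  then have "(\<lambda>x::real. 1 / x ^ 2) absolutely_integrable_on {1..}"
    by (subst absolutely_integrable_on_iff_nonneg) auto
  then have "integrable lebesgue (\<lambda>x::real. indicator {1..} x *\<^sub>R (1 / x^2))"
    unfolding set_integrable_def by simp
  then show ?thesis
    by (subst (asm) integrable_completion) auto
qed

definition gq :: "real \<Rightarrow> real" where "gq x = indicator {0..} x * exp (Hq x)"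
definition Iq :: real where "Iq = integral\<^sup>L lborel gq"
definition fq :: "real \<Rightarrow> real" where "fq x = gq x / Iq"

lemma gq_meas[measurable]: "gq \<in> borel_measurable borel"
proof -
  have "continuous_on {0..} (\<lambda>x. exp (Hq x))"
    using H_cont by (intro continuous_on_exp)
  from borel_measurable_continuous_on_indicator[OF _ this]
  show ?thesis unfolding gq_def by simp
qed

lemma gq_nonneg: "gq x \<ge> 0" by (simp add: gq_def)

lemma gq_int: "integrable lborel gq"
proof -
  define d where "d x = indicator {0..1} x + indicator {1..} x * (1 / x^2)" for x :: real
  show ?thesis
  proof (rule Bochner_Integration.integrable_bound[where f=d])
  have "integrable lborel (\<lambda>x::real. indicator {0..1} x *\<^sub>R (1::real))"
    by (rule borel_integrable_compact) auto
  then show "integrable lborel d" unfolding d_def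
    using int_sq by (intro Bochner_Integration.integrable_add) auto
  show "gq \<in> borel_measurable lborel" by simp
  show "AE x in lborel. norm (gq x) \<le> norm (d x)"
  proof (intro AE_I2)
    fix x :: real
    have d0: "d x \<ge> 0" by (simp add: d_def)
    have "gq x \<le> d x"
    proof (cases "x < 0")
      case True then show ?thesis using d0 by (simp add: gq_def)
    next
      case False
      then have x0: "x \<ge> 0" by simp
      have e: "exp (Hq x) \<le> 1 / (1 + x)^2" using expH_le x0 .
      show ?thesis
      proof (cases "x \<le> 1")
        case True
        have "1 / (1 + x)^2 \<le> 1" using x0 by (simp add: field_simps)
        moreover have "gq x = exp (Hq x)" using x0 by (simp add: gq_def)
        ultimately have "gq x \<le> 1" using e by linarith
        moreover have "d x \<ge> 1" using True x0 by (simp add: d_def)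
        ultimately show ?thesis by linarith
      next
        case False
        have "1 / (1 + x)^2 \<le> 1 / x^2" using False
          by (intro divide_left_mono power_mono) auto
        then show ?thesis using e False x0 by (simp add: gq_def d_def indicator_def)
      qed
    qed
    then show "norm (gq x) \<le> norm (d x)" using d0 gq_nonneg[of x] by simp
  qed
  qed
qed

lemma Iq_pos: "Iq > 0"
proof -
  have "Iq \<ge> 0" unfolding Iq_def using gq_nonneg by (intro integral_nonneg_AE) auto
  moreover have "Iq \<noteq> 0"
  proof
    assume "Iq = 0"
    then have "AE x in lborel. gq x = 0"
      using integral_nonneg_eq_0_iff_AE[OF gq_int] gq_nonneg unfolding Iq_def by auto
    then have "AE x in lborel. x \<notin> {0..1::real}"
      by eventually_elim (auto simp: gq_def)
    then have "emeasure lborel {0..1::real} = 0"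
      by (subst (asm) AE_iff_measurable[of "{0..1}"]) auto
    then show False by simp
  qed
  ultimately show ?thesis by simp
qed

lemma fq_pos: "x \<ge> 0 \<Longrightarrow> fq x = exp (Hq x) / Iq"
  by (simp add: fq_def gq_def)

lemma fq_gt: "x \<ge> 0 \<Longrightarrow> fq x > 0"
  using Iq_pos by (simp add: fq_pos)

lemma fq_neg: "x < 0 \<Longrightarrow> fq x = 0"
  by (simp add: fq_def gq_def)

lemma fq_nonneg: "fq x \<ge> 0"
  using Iq_pos gq_nonneg[of x] by (simp add: fq_def)

lemma fq_meas[measurable]: "fq \<in> borel_measurable borel"
  unfolding fq_def by measurable

lemma fq_int: "integrable lborel fq"
  unfolding fq_def using gq_int by (rule integrable_divide_zero)

lemma fq_integral: "integral\<^sup>L lborel fq = 1"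
  unfolding fq_def using Iq_pos by (simp add: Iq_def)

lemma fq_ratio: "0 \<le> a \<Longrightarrow> 0 \<le> b \<Longrightarrow> fq b / fq a = exp (Hq b - Hq a)"
  using Iq_pos by (simp add: fq_pos exp_diff)

lemma density: "prob_density_nonneg fq"
  unfolding prob_density_nonneg_def using fq_nonneg fq_neg fq_int fq_integral by auto

lemma fq_lt: "((\<lambda>x. fq (x + t) / fq x) \<longlongrightarrow> 1) at_top"
proof -
  have bound: "\<forall>\<^sub>F x in at_top. norm (Hq (x + t) - Hq x) \<le> Kq * \<bar>t\<bar> / (1 + x - \<bar>t\<bar>)"
  proof (rule eventually_at_top_linorderI[of "\<bar>t\<bar>"])
    fix x assume x: "\<bar>t\<bar> \<le> x"
    show "norm (Hq (x + t) - Hq x) \<le> Kq * \<bar>t\<bar> / (1 + x - \<bar>t\<bar>)"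
    proof (cases "t \<ge> 0")
      case True
      have "\<bar>Hq (x + t) - Hq x\<bar> \<le> Kq * (x + t - x) / (1 + x)"
        using H_lip[of x "x + t"] True x by simp
      also have "\<dots> = Kq * \<bar>t\<bar> / (1 + x)" using True by simp
      also have "\<dots> \<le> Kq * \<bar>t\<bar> / (1 + x - \<bar>t\<bar>)"
        using x Kq_pos by (intro divide_left_mono) auto
      finally show ?thesis by simp
    next
      case False
      have "\<bar>Hq x - Hq (x + t)\<bar> \<le> Kq * (x - (x + t)) / (1 + (x + t))"
        using H_lip[of "x + t" x] False x by simp
      also have "\<dots> = Kq * \<bar>t\<bar> / (1 + x - \<bar>t\<bar>)" using False by simp
      finally show ?thesis by (simp add: abs_minus_commute)
    qed
  qed
  have "filterlim (\<lambda>x. (1 - \<bar>t\<bar>) + x) at_top at_top"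
    by (rule filterlim_tendsto_add_at_top[OF tendsto_const filterlim_ident])
  then have "filterlim (\<lambda>x. 1 + x - \<bar>t\<bar>) at_top at_top"
    by (simp add: algebra_simps)
  then have lim0: "((\<lambda>x. Kq * \<bar>t\<bar> / (1 + x - \<bar>t\<bar>)) \<longlongrightarrow> 0) at_top"
    by (intro tendsto_divide_0[OF tendsto_const] filterlim_at_top_imp_at_infinity)
  have "((\<lambda>x. Hq (x + t) - Hq x) \<longlongrightarrow> 0) at_top"
    by (rule Lim_null_comparison[OF bound lim0])
  then have "((\<lambda>x. exp (Hq (x + t) - Hq x)) \<longlongrightarrow> exp 0) at_top"
    by (rule tendsto_exp)
  then have *: "((\<lambda>x. exp (Hq (x + t) - Hq x)) \<longlongrightarrow> 1) at_top" by simp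
  have "\<forall>\<^sub>F x in at_top. exp (Hq (x + t) - Hq x) = fq (x + t) / fq x"
    by (rule eventually_at_top_linorderI[of "\<bar>t\<bar>"]) (simp add: fq_ratio)
  then show ?thesis by (rule Lim_transform_eventually[OF *])
qed

lemma half_lim:
  assumes S_meas: "\<And>x. S x \<in> sets borel" and S_sub: "\<And>x. S x \<subseteq> {0..x/2}"
    and S_sup: "\<And>x. x \<ge> 0 \<Longrightarrow> {0..<x/2} \<subseteq> S x"
  shows "((\<lambda>x. \<integral>y. indicator (S x) y * (fq (x - y) * fq y) / fq x \<partial>lborel) \<longlongrightarrow> 1) at_top"
proof -
  have "((\<lambda>x. \<integral>y. indicator (S x) y * (fq (x - y) * fq y) / fq x \<partial>lborel) \<longlongrightarrow> integral\<^sup>L lborel fq) at_top"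
  proof (rule integral_dominated_convergence_at_top[where w = "\<lambda>y. exp Kq * fq y"])
    show "fq \<in> borel_measurable lborel" by simp
    show "(\<lambda>y. indicator (S t) y * (fq (t - y) * fq y) / fq t) \<in> borel_measurable lborel" for t
    proof -
      have [measurable]: "S t \<in> sets borel" by (rule S_meas)
      show ?thesis by measurable
    qed
    show "integrable lborel (\<lambda>y. exp Kq * fq y)" using fq_int by simp
    show "AE y in lborel. ((\<lambda>x. indicator (S x) y * (fq (x - y) * fq y) / fq x) \<longlongrightarrow> fq y) at_top"
    proof (rule AE_I2)
      fix y :: real
      show "((\<lambda>x. indicator (S x) y * (fq (x - y) * fq y) / fq x) \<longlongrightarrow> fq y) at_top"
      proof (cases "y < 0")
        case True
        have "indicator (S x) y = (0::real)" for x using S_sub[of x] True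
          by (auto simp: indicator_def)
        then show ?thesis using True fq_neg[of y] by simp
      next
        case False
        have "((\<lambda>x. fq (x + - y) / fq x * fq y) \<longlongrightarrow> 1 * fq y) at_top"
          by (intro tendsto_mult fq_lt tendsto_const)
        moreover have "\<forall>\<^sub>F x in at_top. fq (x + - y) / fq x * fq y = indicator (S x) y * (fq (x - y) * fq y) / fq x"
        proof (rule eventually_at_top_linorderI[of "2 * y + 1"])
          fix x assume x: "2 * y + 1 \<le> x"
          then have "y \<in> S x" using S_sup[of x] False by auto
          then show "fq (x + - y) / fq x * fq y = indicator (S x) y * (fq (x - y) * fq y) / fq x"
            by simp
        qed
        ultimately show ?thesis by (simp add: tendsto_cong[THEN iffD1, rotated])
      qed
    qed
    show "\<forall>\<^sub>F x in at_top. AE y in lborel. norm (indicator (S x) y * (fq (x - y) * fq y) / fq x) \<le> exp Kq * fq y"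
    proof (rule eventually_at_top_linorderI[of 0], rule AE_I2)
      fix x y :: real assume x: "0 \<le> x"
      show "norm (indicator (S x) y * (fq (x - y) * fq y) / fq x) \<le> exp Kq * fq y"
      proof (cases "y \<in> S x")
        case False then show ?thesis using fq_nonneg[of y] by simp
      next
        case True
        then have y: "0 \<le> y" "y \<le> x / 2" using S_sub[of x] by auto
        have "Hq (x - y) - Hq x \<le> \<bar>Hq x - Hq (x - y)\<bar>" by simp
        also have "\<dots> \<le> Kq * (x - (x - y)) / (1 + (x - y))" using H_lip[of "x - y" x] y by simp
        also have "\<dots> \<le> Kq"
          using y Kq_pos by (simp add: divide_le_eq mult_left_mono)
        finally have "fq (x - y) / fq x \<le> exp Kq" using fq_ratio[of x "x - y"] x y by simp
        moreover have "fq (x - y) / fq x \<ge> 0" using fq_nonneg by simp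
        ultimately have bnd: "fq (x - y) / fq x * fq y \<le> exp Kq * fq y"
          using fq_nonneg[of y] by (intro mult_right_mono) auto
        have eq: "indicator (S x) y * (fq (x - y) * fq y) / fq x = fq (x - y) / fq x * fq y"
          using True by simp
        have nn: "fq (x - y) / fq x * fq y \<ge> 0" using fq_nonneg by simp
        show ?thesis unfolding eq real_norm_def abs_of_nonneg[OF nn] using bnd .
      qed
    qed
  qed
  then show ?thesis using fq_integral by simp
qed

lemma conv_int: assumes x: "x \<ge> 0"
  shows "set_integrable lborel {0..x} (\<lambda>y. fq (x - y) * fq y)"
proof -
  have c1: "continuous_on {0..x} (\<lambda>y. Hq (x - y))"
    by (rule continuous_on_compose2[OF H_cont]) (auto intro!: continuous_intros)
  have c2: "continuous_on {0..x} Hq" using H_cont by (rule continuous_on_subset) auto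
  have "continuous_on {0..x} (\<lambda>y. exp (Hq (x - y)) / Iq * (exp (Hq y) / Iq))"
    using Iq_pos by (intro continuous_intros c1 c2) auto
  then have "integrable lborel (\<lambda>y. indicator {0..x} y *\<^sub>R (exp (Hq (x - y)) / Iq * (exp (Hq y) / Iq)))"
    by (intro borel_integrable_compact) auto
  also have "?this \<longleftrightarrow> integrable lborel (\<lambda>y. indicator {0..x} y *\<^sub>R (fq (x - y) * fq y))"
    by (intro Bochner_Integration.integrable_cong refl) (auto simp: indicator_def fq_pos)
  finally show ?thesis unfolding set_integrable_def .
qed

lemma conv_split: assumes x: "x \<ge> 0"
  shows "conv0 fq x = (\<integral>y. indicator {0..x/2} y * (fq (x - y) * fq y) \<partial>lborel)
                   + (\<integral>y. indicator {0..<x/2} y * (fq (x - y) * fq y) \<partial>lborel)"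
proof -
  let ?G = "\<lambda>y. fq (x - y) * fq y"
  have si: "set_integrable lborel {0..x} ?G" by (rule conv_int[OF x])
  have i1: "integrable lborel (\<lambda>y. indicator {0..x/2} y * ?G y)"
    using set_integrable_subset[OF si, of "{0..x/2}"] x unfolding set_integrable_def by auto
  have sub: "{x/2<..x} \<subseteq> {0..x}" using x by auto
  have i2: "integrable lborel (\<lambda>y. indicator {x/2<..x} y * ?G y)"
    using set_integrable_subset[OF si _ sub] unfolding set_integrable_def by auto
  have "conv0 fq x = (\<integral>y. indicator {0..x} y * ?G y \<partial>lborel)"
    by (simp add: conv0_def set_lebesgue_integral_def)
  also have "\<dots> = (\<integral>y. indicator {0..x/2} y * ?G y + indicator {x/2<..x} y * ?G y \<partial>lborel)"
    using x by (intro Bochner_Integration.integral_cong refl) (auto simp: indicator_def)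
  also have "\<dots> = (\<integral>y. indicator {0..x/2} y * ?G y \<partial>lborel) + (\<integral>y. indicator {x/2<..x} y * ?G y \<partial>lborel)"
    by (rule Bochner_Integration.integral_add[OF i1 i2])
  also have "(\<integral>y. indicator {x/2<..x} y * ?G y \<partial>lborel)
      = \<bar>-1\<bar> *\<^sub>R (\<integral>z. indicator {x/2<..x} (x + -1 * z) * ?G (x + -1 * z) \<partial>lborel)"
    by (rule lborel_integral_real_affine) simp
  also have "\<dots> = (\<integral>z. indicator {0..<x/2} z * ?G z \<partial>lborel)"
    by (auto intro!: Bochner_Integration.integral_cong simp: indicator_def)
  finally show ?thesis .
qed

theorem proposition1p1:
  shows "\<exists>f :: real \<Rightarrow> real. prob_density_nonneg f \<and> subexp_density f \<and> \<not> almost_decreasing f"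
proof (intro exI conjI)
  show "prob_density_nonneg fq" by (rule density)
  have lt: "long_tailed_density fq"
    unfolding long_tailed_density_def
    using fq_lt fq_gt by (auto intro: eventually_at_top_linorderI[of 0])
  define J1 where "J1 x = (\<integral>y. indicator {0..x/2} y * (fq (x - y) * fq y) / fq x \<partial>lborel)" for x
  define J2 where "J2 x = (\<integral>y. indicator {0..<x/2} y * (fq (x - y) * fq y) / fq x \<partial>lborel)" for x
  have l1: "(J1 \<longlongrightarrow> 1) at_top" unfolding J1_def by (rule half_lim) auto
  have l2: "(J2 \<longlongrightarrow> 1) at_top" unfolding J2_def by (rule half_lim) auto
  have "((\<lambda>x. (J1 x + J2 x) / 2) \<longlongrightarrow> (1 + 1) / 2) at_top"
    by (intro tendsto_intros l1 l2) auto
  then have l: "((\<lambda>x. (J1 x + J2 x) / 2) \<longlongrightarrow> 1) at_top" by simp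
  have ev: "\<forall>\<^sub>F x in at_top. (J1 x + J2 x) / 2 = conv0 fq x / (2 * fq x)"
  proof (rule eventually_at_top_linorderI[of 0])
    fix x :: real assume x: "0 \<le> x"
    have "J1 x = (\<integral>y. indicator {0..x/2} y * (fq (x - y) * fq y) \<partial>lborel) / fq x"
      unfolding J1_def by (rule integral_divide_zero)
    moreover have "J2 x = (\<integral>y. indicator {0..<x/2} y * (fq (x - y) * fq y) \<partial>lborel) / fq x"
      unfolding J2_def by (rule integral_divide_zero)
    ultimately show "(J1 x + J2 x) / 2 = conv0 fq x / (2 * fq x)"
      using conv_split[OF x] by (simp add: add_divide_distrib)
  qed
  show "subexp_density fq"
    unfolding subexp_density_def
    using lt Lim_transform_eventually[OF l ev] conv_int
    by (auto intro: eventually_at_top_linorderI[of 0])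
  show "\<not> almost_decreasing fq"
  proof
    assume "almost_decreasing fq"
    then obtain x0 C where x0: "x0 \<ge> 0" and C: "\<And>x y. x0 \<le> x \<Longrightarrow> x \<le> y \<Longrightarrow> fq y / fq x \<le> C"
      unfolding almost_decreasing_def by blast
    obtain x y where xy: "x0 \<le> x" "x \<le> y" "Hq y - Hq x > \<bar>C\<bar>" using H_rise by blast
    have "fq y / fq x = exp (Hq y - Hq x)" using xy x0 by (intro fq_ratio) auto
    also have "\<dots> > exp \<bar>C\<bar>" using xy by simp
    finally have "fq y / fq x > exp \<bar>C\<bar>" .
    moreover have "exp \<bar>C\<bar> \<ge> 1 + \<bar>C\<bar>" by (rule exp_ge_add_one_self)
    moreover have "fq y / fq x \<le> C" using C xy by blast
    ultimately show False by linarith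
  qed
qed

end
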